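(* Let $\tau$ be a trace on $\widehat{TL}_3(q)$, let $X=g_{\sigma_2}g_{\sigma_1}g_{a_3}$, $u=g_{\sigma_2}g_{a_3}g_{\sigma_2}^{-1}$, and let $r\le s$ be positive integers. Then there exist an integer $0\le h\le s$, elements $c_0,\dots,c_h\in B$ and finitely many Markov elements $M_i$ such that $$\tau\Big((g_{\sigma_1}u)^{r}g_{\sigma_1}g_{\sigma_2}(g_{\sigma_1}u)^{s}g_{\sigma_1}g_{\sigma_2}\Big)=\tau\Big(\sum_{j=0}^{h}c_jX^{j}+\sum_iM_i\Big).$$
   Context: $K$ is an integral domain of characteristic $0$, $q\in K$ invertible and a square, $q+1$ invertible. $\widehat{TL}_3(q)$ is the unital $K$-algebra generated by $g_{\sigma_1},g_{\sigma_2},g_{a_3}$ with relations $g_{\sigma_1}g_{\sigma_2}g_{\sigma_1}=g_{\sigma_2}g_{\sigma_1}g_{\sigma_2}$, $g_{\sigma_i}g_{a_3}g_{\sigma_i}=g_{a_3}g_{\sigma_i}g_{a_3}$ ($i=1,2$), $x^2=(q-1)x+q$ for each generator $x$, and $V(g_{\sigma_1},g_{\sigma_2})=V(g_{\sigma_1},g_{a_3})=V(g_{\sigma_2},g_{a_3})=0$ where $V(x,y)=xyx+xy+yx+x+y+1$. $B$ is the unital subalgebra generated by $g_{\sigma_1}$ and $u$. A Markov element is an element $A\,g_{\sigma_2}^{\epsilon}A'$ with $A,A'\in B$, $\epsilon\in\{0,1\}$. A trace is a $K$-linear map $\tau:\widehat{TL}_3(q)\to K$ with $\tau(xy)=\tau(yx)$.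 *)

theory Defs
  imports Main
begin

text \<open>A unital K-algebra A is modelled as a ring A together with a ring homomorphism
  alg :: K => A whose image is central.\<close>

definition is_K_algebra :: "('k::comm_ring_1 \<Rightarrow> 'a::ring_1) \<Rightarrow> bool" where
  "is_K_algebra alg \<longleftrightarrow> alg 0 = 0 \<and> alg 1 = 1 \<and>
     (\<forall>x y. alg (x + y) = alg x + alg y) \<and> (\<forall>x y. alg (x * y) = alg x * alg y) \<and>
     (\<forall>k b. alg k * b = b * alg k)"

definition Vrel :: "'a::ring_1 \<Rightarrow> 'a \<Rightarrow> 'a" where
  "Vrel x y = x*y*x + x*y + y*x + x + y + 1"

text \<open>Relations of the affine Temperley-Lieb algebra \<open>TL_3^(q)\<close> on the generators
  g1 = g_sigma1, g2 = g_sigma2, g3 = g_a3.\<close>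
definition TL3_rels :: "('k::comm_ring_1 \<Rightarrow> 'a::ring_1) \<Rightarrow> 'k \<Rightarrow> 'a \<Rightarrow> 'a \<Rightarrow> 'a \<Rightarrow> bool" where
  "TL3_rels alg q g1 g2 g3 \<longleftrightarrow>
     g1*g2*g1 = g2*g1*g2 \<and> g1*g3*g1 = g3*g1*g3 \<and> g2*g3*g2 = g3*g2*g3 \<and>
     (\<forall>x\<in>{g1,g2,g3}. x*x = alg (q - 1) * x + alg q) \<and>
     Vrel g1 g2 = 0 \<and> Vrel g1 g3 = 0 \<and> Vrel g2 g3 = 0"

inductive_set subalg2 :: "('k \<Rightarrow> 'a::ring_1) \<Rightarrow> 'a \<Rightarrow> 'a \<Rightarrow> 'a set"
  for alg :: "'k \<Rightarrow> 'a" and x :: 'a and y :: 'a where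
  scal: "alg k \<in> subalg2 alg x y"
| gen1: "x \<in> subalg2 alg x y"
| gen2: "y \<in> subalg2 alg x y"
| add: "a \<in> subalg2 alg x y \<Longrightarrow> b \<in> subalg2 alg x y \<Longrightarrow> a + b \<in> subalg2 alg x y"
| mult: "a \<in> subalg2 alg x y \<Longrightarrow> b \<in> subalg2 alg x y \<Longrightarrow> a * b \<in> subalg2 alg x y"

definition is_markov :: "'a set \<Rightarrow> 'a::ring_1 \<Rightarrow> 'a \<Rightarrow> bool" where
  "is_markov B g2 m \<longleftrightarrow> (\<exists>A\<in>B. \<exists>A'\<in>B. \<exists>eps::nat. eps \<le> 1 \<and> m = A * g2 ^ eps * A')"

definition is_trace :: "('k::comm_ring_1 \<Rightarrow> 'a::ring_1) \<Rightarrow> ('a \<Rightarrow> 'k) \<Rightarrow> bool" where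
  "is_trace alg \<tau> \<longleftrightarrow> (\<forall>x y. \<tau> (x + y) = \<tau> x + \<tau> y) \<and> (\<forall>k x. \<tau> (alg k * x) = k * \<tau> x) \<and>
     (\<forall>x y. \<tau> (x * y) = \<tau> (y * x))"

end

theory Submission
  imports Defs
begin

locale tl3 =
  fixes alg :: "'k::comm_ring_1 \<Rightarrow> 'a::ring_1"
    and q qi :: 'k and g1 g2 g3 g2inv :: 'a and \<tau> :: "'a \<Rightarrow> 'k"
  assumes alg: "is_K_algebra alg"
    and qqi: "q * qi = 1"
    and rels: "TL3_rels alg q g1 g2 g3"
    and inv1: "g2 * g2inv = 1" and inv2: "g2inv * g2 = 1"
    and tr: "is_trace alg \<tau>"
begin

lemma alg0[simp]: "alg 0 = 0" and alg1[simp]: "alg 1 = 1"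
  and alg_add: "alg (x + y) = alg x + alg y" and alg_mult: "alg (x * y) = alg x * alg y"
  and alg_comm: "alg k * b = b * alg k"
  using alg unfolding is_K_algebra_def by blast+

lemma alg_uminus: "alg (- x) = - alg x"
  using alg_add[of x "-x"] by (metis add.right_inverse alg0 add.inverse_unique)
lemma alg_diff: "alg (x - y) = alg x - alg y"
  using alg_add[of x "-y"] by (simp add: alg_uminus)

lemma alg_left: "x * (alg k * y) = alg k * (x * y)"
  by (metis alg_comm mult.assoc)
lemma alg_right: "x * alg k = alg k * x"
  by (simp add: alg_comm)
lemma alg_alg: "alg a * (alg b * y) = alg (a * b) * y"
  by (simp add: alg_mult mult.assoc)

lemma tau_add: "\<tau> (x + y) = \<tau> x + \<tau> y" and tau_scal: "\<tau> (alg k * x) = k * \<tau> x"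
  and tau_comm: "\<tau> (x * y) = \<tau> (y * x)"
  using tr unfolding is_trace_def by blast+

lemma quad_gen:
  assumes "x * x = alg (q - 1) * x + alg q"
  shows "(x + 1) * (x + 1) = alg (q + 1) * (x + 1)"
proof -
  have "(x + 1) * (x + 1) = x * x + x + x + 1" by (simp add: algebra_simps)
  also have "\<dots> = alg (q + 1) * (x + 1)"
    using assms by (simp add: alg_add alg_diff algebra_simps)
  finally show ?thesis .
qed

lemma tl_gen:
  assumes "x * x = alg (q - 1) * x + alg q" and "Vrel x y = 0"
  shows "(x + 1) * (y + 1) * (x + 1) = alg q * (x + 1)"
proof -
  have "(x + 1) * (y + 1) * (x + 1) = Vrel x y + (x * x - alg (q - 1) * x - alg q) + alg q * (x + 1)"
    unfolding Vrel_def by (simp add: alg_diff algebra_simps)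
  then show ?thesis using assms by simp
qed

lemma tl_gen2:
  assumes "x * x = alg (q - 1) * x + alg q" and "y * y = alg (q - 1) * y + alg q"
    and "Vrel x y = 0" and "x * y * x = y * x * y"
  shows "(y + 1) * (x + 1) * (y + 1) = alg q * (y + 1)"
proof -
  have "(y + 1) * (x + 1) * (y + 1) = Vrel x y
      + (y * y - alg (q - 1) * y - alg q) + (y * x * y - x * y * x) + alg q * (y + 1)"
    unfolding Vrel_def by (simp add: alg_diff algebra_simps)
  then show ?thesis using assms by simp
qed

definition "e1 = g1 + 1"
definition "e2 = g2 + 1"
definition "e3 = g3 + 1"
definition "d = q + 1"

lemma R: "g1*g2*g1 = g2*g1*g2" "g1*g3*g1 = g3*g1*g3" "g2*g3*g2 = g3*g2*g3"
  "g1*g1 = alg (q - 1) * g1 + alg q" "g2*g2 = alg (q - 1) * g2 + alg q" "g3*g3 = alg (q - 1) * g3 + alg q"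
  "Vrel g1 g2 = 0" "Vrel g1 g3 = 0" "Vrel g2 g3 = 0"
  using rels unfolding TL3_rels_def by auto

lemma ee: "e1 * e1 = alg d * e1" "e2 * e2 = alg d * e2" "e3 * e3 = alg d * e3"
  unfolding e1_def e2_def e3_def d_def using quad_gen R by auto

lemma eee: "e1 * e2 * e1 = alg q * e1" "e2 * e1 * e2 = alg q * e2"
  "e1 * e3 * e1 = alg q * e1" "e3 * e1 * e3 = alg q * e3"
  "e2 * e3 * e2 = alg q * e2" "e3 * e2 * e3 = alg q * e3"
  unfolding e1_def e2_def e3_def using tl_gen tl_gen2 R by auto

lemma g2e2: "g2 * e2 = alg q * e2" "e2 * g2 = alg q * e2"
proof -
  show 1: "g2 * e2 = alg q * e2"
    unfolding e2_def using R(5) by (simp add: alg_diff algebra_simps)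
  have "e2 * g2 = g2 * e2" unfolding e2_def by (simp add: algebra_simps)
  then show "e2 * g2 = alg q * e2" using 1 by simp
qed

lemma g2inv_eq: "g2inv = alg qi * (e2 - alg q)"
proof -
  have "g2 * (e2 - alg q) = alg q"
    unfolding e2_def using R(5) by (simp add: alg_diff algebra_simps) (metis alg_comm)
  then have "g2inv * (g2 * (e2 - alg q)) = g2inv * alg q" by simp
  then have "e2 - alg q = g2inv * alg q" using inv2 by (simp add: mult.assoc[symmetric])
  then have "alg qi * (e2 - alg q) = alg qi * (alg q * g2inv)" by (simp add: alg_comm[of q g2inv])
  also have "\<dots> = g2inv" using qqi by (simp add: alg_alg mult.commute)
  finally show ?thesis by simp
qed


lemma ctx2: assumes "(a::'a) * b = c" shows "a * (b * x) = c * x"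
  using assms by (simp add: mult.assoc[symmetric])
lemma ctx3: assumes "(a::'a) * b * c = r" shows "a * (b * (c * x)) = r * x"
  using assms by (simp add: mult.assoc[symmetric])

lemma qqK: "qi * (q * x) = x" "q * (qi * x) = x" "qi * q = 1"
  using qqi by (simp_all add: mult.assoc[symmetric] mult.commute)

lemma qiq: "alg qi * (alg q * x) = x" "alg q * (alg qi * x) = x"
  using qqi by (simp_all add: alg_alg mult.commute)

lemma g2inv_e2: "g2inv * e2 = alg qi * e2" "e2 * g2inv = alg qi * e2"
proof -
  have "e2 = g2inv * (g2 * e2)" using inv2 by (simp add: mult.assoc[symmetric])
  also have "\<dots> = alg q * (g2inv * e2)" using g2e2 alg_left by simp
  finally have "e2 = alg q * (g2inv * e2)" .
  then show "g2inv * e2 = alg qi * e2" by (metis qiq(1))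
  have "e2 = (e2 * g2) * g2inv" using inv1 by (simp add: mult.assoc)
  also have "\<dots> = alg q * (e2 * g2inv)" using g2e2 by (simp add: mult.assoc)
  finally have "e2 = alg q * (e2 * g2inv)" .
  then show "e2 * g2inv = alg qi * e2" by (metis qiq(1))
qed

definition "Q = g2 * e3 * g2inv"

lemmas algL = alg_left[of g2] alg_left[of g2inv] alg_left[of e1] alg_left[of e2] alg_left[of e3] alg_left[of Q]

lemmas basic = ctx2[OF inv1] ctx2[OF inv2] ctx2[OF g2e2(1)] ctx2[OF g2e2(2)]
  ctx2[OF g2inv_e2(1)] ctx2[OF g2inv_e2(2)] ctx2[OF ee(1)] ctx2[OF ee(2)] ctx2[OF ee(3)]
  ctx3[OF eee(1)] ctx3[OF eee(2)] ctx3[OF eee(3)] ctx3[OF eee(4)] ctx3[OF eee(5)] ctx3[OF eee(6)]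
  inv1 inv2 g2e2 g2inv_e2 ee eee[simplified mult.assoc] algL alg_alg qiq qqK qqi

lemma QQ: "Q * Q = alg d * Q"
  unfolding Q_def by (simp add: mult.assoc basic)

lemma e2Qe2: "e2 * Q * e2 = alg q * e2"
  unfolding Q_def by (simp add: mult.assoc basic)

lemma Qe2Q: "Q * e2 * Q = alg q * Q"
  unfolding Q_def by (simp add: mult.assoc basic)


lemma g2_mult: "g2 * y = e2 * y - y" unfolding e2_def by (simp add: algebra_simps)
lemma g2inv_mult: "g2inv * y = alg qi * (e2 * y) - y"
  unfolding g2inv_eq by (simp add: algebra_simps alg_alg qqK qqi)

lemma R1: "e1 * e2 * Q * e1 = alg q * (e1 * Q * e1) - alg q * (e1 * Q * e2 * e1)"
  unfolding Q_def
  apply (simp add: mult.assoc basic)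
  apply (simp add: g2_mult g2inv_mult ring_distribs mult.assoc basic)
  done


lemma R2: "Q * e2 * e1 * Q = Q * e1 * Q - alg qi * (Q * e1 * e2 * Q)"
  unfolding Q_def
  apply (simp add: mult.assoc basic)
  apply (simp add: g2_mult g2inv_mult ring_distribs mult.assoc basic)
  done


definition "u = g2 * g3 * g2inv"
abbreviation "BB \<equiv> subalg2 alg g1 u"

lemma Q_u: "Q = u + 1"
  unfolding Q_def u_def e3_def by (simp add: algebra_simps inv1)

lemma B_alg: "alg k \<in> BB" by (rule subalg2.scal)
lemma B_add: "a \<in> BB \<Longrightarrow> b \<in> BB \<Longrightarrow> a + b \<in> BB" by (rule subalg2.add)
lemma B_mult: "a \<in> BB \<Longrightarrow> b \<in> BB \<Longrightarrow> a * b \<in> BB" by (rule subalg2.mult)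
lemma B_1: "1 \<in> BB" using B_alg[of 1] by simp
lemma B_e1: "e1 \<in> BB" unfolding e1_def by (rule B_add[OF subalg2.gen1 B_1])
lemma B_Q: "Q \<in> BB" unfolding Q_u by (rule B_add[OF subalg2.gen2 B_1])
lemma B_pow: "a \<in> BB \<Longrightarrow> a ^ n \<in> BB"
  by (induction n) (auto intro: B_1 B_mult)

lemma tau_diff: "\<tau> (x - y) = \<tau> x - \<tau> y"
  using tau_add[of "x - y" y] by (simp add: eq_diff_eq)

definition "Mk = {x. \<exists>Ms. (\<forall>m\<in>set Ms. is_markov BB g2 m) \<and> \<tau> x = \<tau> (sum_list Ms)}"

lemma tau_sum_list: "\<tau> (sum_list xs) = sum_list (map \<tau> xs)"
  by (induction xs) (auto simp: tau_add tau_scal[of 0 0, simplified])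

lemma Mk_markov: "is_markov BB g2 m \<Longrightarrow> m \<in> Mk"
  unfolding Mk_def by (rule CollectI, rule exI[of _ "[m]"]) simp

lemma Mk_add: "x \<in> Mk \<Longrightarrow> y \<in> Mk \<Longrightarrow> x + y \<in> Mk"
  unfolding Mk_def
proof clarify
  fix Ms Ns assume "\<forall>m\<in>set Ms. is_markov BB g2 m" "\<tau> x = \<tau> (sum_list Ms)"
    "\<forall>m\<in>set Ns. is_markov BB g2 m" "\<tau> y = \<tau> (sum_list Ns)"
  then show "\<exists>Ms. (\<forall>m\<in>set Ms. is_markov BB g2 m) \<and> \<tau> (x + y) = \<tau> (sum_list Ms)"
    by (intro exI[of _ "Ms @ Ns"]) (auto simp: tau_add)
qed

lemma markov_scal: "is_markov BB g2 m \<Longrightarrow> is_markov BB g2 (alg k * m)"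
proof -
  assume "is_markov BB g2 m"
  then obtain A A' eps where h: "A \<in> BB" "A' \<in> BB" "eps \<le> (1::nat)" "m = A * g2 ^ eps * A'"
    unfolding is_markov_def by blast
  have "alg k * m = (alg k * A) * g2 ^ eps * A'" using h(4) by (simp add: mult.assoc)
  moreover have "alg k * A \<in> BB" using h by (intro B_mult B_alg)
  ultimately show ?thesis using h unfolding is_markov_def by blast
qed

lemma Mk_scal: "x \<in> Mk \<Longrightarrow> alg k * x \<in> Mk"
  unfolding Mk_def
proof clarify
  fix Ms assume "\<forall>m\<in>set Ms. is_markov BB g2 m" "\<tau> x = \<tau> (sum_list Ms)"
  then show "\<exists>Ns. (\<forall>m\<in>set Ns. is_markov BB g2 m) \<and> \<tau> (alg k * x) = \<tau> (sum_list Ns)"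
    by (intro exI[of _ "map (\<lambda>m. alg k * m) Ms"])
       (auto simp: tau_scal markov_scal sum_list_const_mult)
qed

lemma Mk_tau: "\<tau> x = \<tau> y \<Longrightarrow> y \<in> Mk \<Longrightarrow> x \<in> Mk"
  unfolding Mk_def by auto

lemma Mk_diff: "x \<in> Mk \<Longrightarrow> y \<in> Mk \<Longrightarrow> x - y \<in> Mk"
proof -
  assume "x \<in> Mk" "y \<in> Mk"
  then have "x + alg (-1) * y \<in> Mk" by (intro Mk_add Mk_scal)
  then show ?thesis by (simp add: alg_uminus)
qed

lemma Mk_BgB: "a \<in> BB \<Longrightarrow> b \<in> BB \<Longrightarrow> a * g2 * b \<in> Mk"
proof -
  assume "a \<in> BB" "b \<in> BB"
  moreover have "a * g2 * b = a * g2 ^ (1::nat) * b" by simp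
  ultimately show ?thesis unfolding is_markov_def by (intro Mk_markov) (unfold is_markov_def, blast)
qed

lemma Mk_B: "a \<in> BB \<Longrightarrow> b \<in> BB \<Longrightarrow> a * b \<in> Mk"
proof -
  assume "a \<in> BB" "b \<in> BB"
  moreover have "a * b = a * g2 ^ (0::nat) * b" by simp
  ultimately show ?thesis by (intro Mk_markov) (unfold is_markov_def, blast)
qed

lemma Mk_BeB: "a \<in> BB \<Longrightarrow> b \<in> BB \<Longrightarrow> a * e2 * b \<in> Mk"
proof -
  assume a: "a \<in> BB" and b: "b \<in> BB"
  have "a * e2 * b = a * g2 * b + a * b" unfolding e2_def by (simp add: algebra_simps)
  then show ?thesis using Mk_add[OF Mk_BgB[OF a b] Mk_B[OF a b]] by simp
qed


definition "L z = (if z then e1 else Q)"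
definition "wp w = foldr (\<lambda>z acc. L z * acc) w 1"

lemma wp_Nil[simp]: "wp [] = 1" and wp_Cons[simp]: "wp (z # w) = L z * wp w"
  unfolding wp_def by simp_all

lemma wp_append: "wp (a @ b) = wp a * wp b"
  by (induction a) (simp_all add: mult.assoc)

lemma L_B: "L z \<in> BB" unfolding L_def using B_e1 B_Q by simp
lemma wp_B: "wp w \<in> BB" by (induction w) (simp_all add: B_1 B_mult L_B)

lemma LL: "L z * L z = alg d * L z" unfolding L_def using ee(1) QQ by simp
lemma eLe: "e2 * L z * e2 = alg q * e2" unfolding L_def using eee(2) e2Qe2 by simp
lemma LeL: "L z * e2 * L z = alg q * L z" unfolding L_def using eee(1) Qe2Q by simp
lemma Rgen: "z \<noteq> z' \<Longrightarrow> \<exists>c1 c2. L z' * e2 * L z * L z' =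
    alg c1 * (L z' * L z * L z') + alg c2 * (L z' * L z * e2 * L z')"
proof (cases z')
  case True
  assume "z \<noteq> z'"
  then have "z = False" using True by simp
  then show ?thesis using True R1
    by (intro exI[where x=q] exI[where x="-q"]) (simp add: L_def alg_uminus)
next
  case False
  assume "z \<noteq> z'"
  then have "z = True" using False by simp
  then show ?thesis using False R2
    by (intro exI[where x=1] exI[where x="-qi"]) (simp add: L_def alg_uminus)
qed

lemma W: "e2 * wp y * e2 * wp x \<in> Mk"
proof (induction "length y" arbitrary: y x rule: less_induct)
  case less
  show ?case
  proof (cases y)
    case Nil
    have "e2 * wp y * e2 * wp x = alg d * (1 * e2 * wp x)"
      using Nil ee(2) by (simp add: mult.assoc[symmetric])
    then show ?thesis using Mk_scal[OF Mk_BeB[OF B_1 wp_B]] by simp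
  next
    case (Cons z ys)
    show ?thesis
    proof (cases ys)
      case Nil
      have "e2 * wp y * e2 * wp x = alg q * (1 * e2 * wp x)"
        using Cons Nil eLe by simp (simp add: mult.assoc)
      then show ?thesis using Mk_scal[OF Mk_BeB[OF B_1 wp_B]] by simp
    next
      case (Cons z' ys')
      have y: "y = z # z' # ys'" using Cons \<open>y = z # ys\<close> by simp
      show ?thesis
      proof (cases "z = z'")
        case True
        have "e2 * wp y * e2 * wp x = alg d * (e2 * wp (z # ys') * e2 * wp x)"
          using y True LL by (simp add: mult.assoc[symmetric] algL) (simp add: mult.assoc algL)
        moreover have "e2 * wp (z # ys') * e2 * wp x \<in> Mk"
          using less.hyps[of "z # ys'"] y by simp
        ultimately show ?thesis using Mk_scal by simp
      next
        case False
        show ?thesis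
        proof (cases x rule: rev_cases)
          case Nil
          have "\<tau> (e2 * wp y * e2 * wp x) = \<tau> ((wp y * e2) * e2)"
            using Nil tau_comm[of e2 "wp y * e2"] by (simp add: mult.assoc)
          also have "\<dots> = \<tau> (alg d * (wp y * e2 * 1))" using ee(2) by (simp add: mult.assoc alg_left[of "wp y"])
          finally show ?thesis using Mk_tau Mk_scal[OF Mk_BeB[OF wp_B B_1]] by blast
        next
          case (snoc xs l)
          have t1: "\<tau> (e2 * wp y * e2 * wp x) = \<tau> (L l * (e2 * wp y * e2 * wp xs))"
            using snoc tau_comm[of "e2 * wp y * e2 * wp xs" "L l"] by (simp add: wp_append mult.assoc)
          show ?thesis
          proof (cases "l = z")
            case True
            have "L l * (e2 * wp y * e2 * wp xs) = alg q * ((L z * wp (z' # ys')) * e2 * wp xs)"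
              using True y LeL by (simp add: mult.assoc[symmetric])
            then show ?thesis using t1 Mk_tau Mk_scal[OF Mk_BeB[OF B_mult[OF L_B wp_B] wp_B]] by metis
          next
            case False
            then have lz: "l = z'" using \<open>z \<noteq> z'\<close> by blast
            obtain c1 c2 where c: "L z' * e2 * L z * L z' =
                alg c1 * (L z' * L z * L z') + alg c2 * (L z' * L z * e2 * L z')"
              using Rgen[OF \<open>z \<noteq> z'\<close>] by blast
            have "L l * (e2 * wp y * e2 * wp xs) = (L z' * e2 * L z * L z') * (wp ys' * e2 * wp xs)"
              using lz y by (simp add: mult.assoc)
            also have "\<dots> = alg c1 * ((L z' * L z * L z' * wp ys') * e2 * wp xs)
                 + alg c2 * ((L z' * L z) * (e2 * wp (z' # ys') * e2 * wp xs))"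
              unfolding c by (simp add: ring_distribs mult.assoc)
            finally have t2: "\<tau> (e2 * wp y * e2 * wp x) = c1 * \<tau> ((L z' * L z * L z' * wp ys') * e2 * wp xs)
                 + c2 * \<tau> ((L z' * L z) * (e2 * wp (z' # ys') * e2 * wp xs))"
              using t1 by (simp add: tau_add tau_scal)
            have t3: "\<tau> ((L z' * L z) * (e2 * wp (z' # ys') * e2 * wp xs))
                = \<tau> (e2 * wp (z' # ys') * e2 * wp (xs @ [z', z]))"
              using tau_comm[of "L z' * L z" "e2 * wp (z' # ys') * e2 * wp xs"]
              by (simp add: wp_append mult.assoc)
            have m1: "(L z' * L z * L z' * wp ys') * e2 * wp xs \<in> Mk"
              by (intro Mk_BeB B_mult L_B wp_B)
            have m2: "e2 * wp (z' # ys') * e2 * wp (xs @ [z', z]) \<in> Mk"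
              using less.hyps[of "z' # ys'"] y by simp
            have "\<tau> (e2 * wp y * e2 * wp x) = \<tau> (alg c1 * ((L z' * L z * L z' * wp ys') * e2 * wp xs)
                 + alg c2 * (e2 * wp (z' # ys') * e2 * wp (xs @ [z', z])))"
              using t2 t3 by (simp add: tau_add tau_scal)
            then show ?thesis using Mk_tau Mk_add[OF Mk_scal[OF m1] Mk_scal[OF m2]] by blast
          qed
        qed
      qed
    qed
  qed
qed


inductive_set Sp where
  base: "alg k * wp w \<in> Sp"
| plus: "a \<in> Sp \<Longrightarrow> b \<in> Sp \<Longrightarrow> a + b \<in> Sp"

lemma Sp_mult: "a \<in> Sp \<Longrightarrow> b \<in> Sp \<Longrightarrow> a * b \<in> Sp"
proof (induction a rule: Sp.induct)
  case (base k w)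
  from base.prems show ?case
  proof (induction b rule: Sp.induct)
    case (base l v)
    have "alg k * wp w * (alg l * wp v) = alg (k * l) * wp (w @ v)"
      by (simp add: wp_append alg_mult mult.assoc alg_left[of "wp w"])
    then show ?case using Sp.base by simp
  next
    case (plus a b)
    then show ?case by (simp add: ring_distribs Sp.plus)
  qed
next
  case (plus a1 a2)
  then show ?case by (simp add: ring_distribs Sp.plus)
qed

lemma B_Sp: "b \<in> BB \<Longrightarrow> b \<in> Sp"
proof (induction b rule: subalg2.induct)
  case (scal k)
  then show ?case using Sp.base[of k "[]"] by simp
next
  case gen1
  have "g1 = alg 1 * wp [True] + alg (-1) * wp []"
    by (simp add: L_def e1_def alg_uminus)
  then show ?case by (metis Sp.base Sp.plus)
next
  case gen2
  have "u = alg 1 * wp [False] + alg (-1) * wp []"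
    by (simp add: L_def Q_u alg_uminus)
  then show ?case by (metis Sp.base Sp.plus)
next
  case (add a b) then show ?case by (blast intro: Sp.plus)
next
  case (mult a b) then show ?case by (blast intro: Sp_mult)
qed

lemma EE: "x \<in> Sp \<Longrightarrow> y \<in> Sp \<Longrightarrow> e2 * x * e2 * y \<in> Mk"
proof (induction x rule: Sp.induct)
  case (base k w)
  from base.prems show ?case
  proof (induction y rule: Sp.induct)
    case (base l v)
    have "e2 * (alg k * wp w) * e2 * (alg l * wp v) = alg (k * l) * (e2 * wp w * e2 * wp v)"
      by (simp add: alg_mult mult.assoc algL alg_left[of "wp w"])
    then show ?case using Mk_scal[OF W] by simp
  next
    case (plus a b)
    then show ?case by (simp add: ring_distribs Mk_add)
  qed
next
  case (plus a1 a2)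
  then show ?case by (simp add: ring_distribs Mk_add)
qed

lemma main_Mk: "A \<in> BB \<Longrightarrow> A' \<in> BB \<Longrightarrow> A * g2 * A' * g2 \<in> Mk"
proof -
  assume a: "A \<in> BB" and a': "A' \<in> BB"
  have eq: "A * g2 * A' * g2 = A * e2 * A' * e2 - A * A' * e2 - A * g2 * A'"
    unfolding e2_def by (simp add: algebra_simps)
  have t: "\<tau> (A * e2 * A' * e2) = \<tau> (e2 * A' * e2 * A)"
    using tau_comm[of A "e2 * A' * e2"] by (simp add: mult.assoc)
  have m1: "e2 * A' * e2 * A \<in> Mk" using EE B_Sp a a' by blast
  have "\<tau> (A * g2 * A' * g2) = \<tau> (e2 * A' * e2 * A - A * A' * e2 - A * g2 * A')"
    by (simp only: eq tau_diff t)
  then show ?thesis using Mk_tau Mk_diff[OF Mk_diff[OF m1 Mk_BeB[OF B_mult[OF a a'] B_1]] Mk_BgB[OF a a']]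
    by simp
qed

end

theorem lemma4p7:
  fixes alg :: "'k::{idom,ring_char_0} \<Rightarrow> 'a::ring_1"
    and q :: 'k and g1 g2 g3 g2inv :: 'a and \<tau> :: "'a \<Rightarrow> 'k" and r s :: nat
  assumes alg: "is_K_algebra alg"
    and q_unit: "\<exists>qi. q * qi = 1" and q_square: "\<exists>t. q = t ^ 2" and q1_unit: "\<exists>w. (q + 1) * w = 1"
    and rels: "TL3_rels alg q g1 g2 g3"
    and inv: "g2 * g2inv = 1" "g2inv * g2 = 1"
    and tr: "is_trace alg \<tau>"
    and r_pos: "0 < r" and rs: "r \<le> s"
  shows "let u = g2 * g3 * g2inv; X = g2 * g1 * g3; B = subalg2 alg g1 u in
    \<exists>h c Ms. h \<le> s \<and> (\<forall>j\<le>h. c j \<in> B) \<and> (\<forall>m\<in>set Ms. is_markov B g2 m) \<and>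
      \<tau> ((g1 * u) ^ r * g1 * g2 * (g1 * u) ^ s * g1 * g2)
        = \<tau> ((\<Sum>j\<le>h. c j * X ^ j) + sum_list Ms)"
proof -
  obtain qi where qqi: "q * qi = 1" using q_unit by blast
  interpret T: tl3 alg q qi g1 g2 g3 g2inv \<tau>
    using alg qqi rels inv tr by unfold_locales
  define u where "u = g2 * g3 * g2inv"
  have uu: "T.u = u" unfolding T.u_def u_def ..
  define A where "A = (g1 * u) ^ r * g1"
  define A' where "A' = (g1 * u) ^ s * g1"
  have gu: "g1 * u \<in> subalg2 alg g1 u" by (intro subalg2.mult subalg2.gen1 subalg2.gen2)
  have AB: "A \<in> subalg2 alg g1 u" "A' \<in> subalg2 alg g1 u"
    unfolding A_def A'_def using T.B_pow[unfolded uu, OF gu] by (auto intro: subalg2.mult subalg2.gen1)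
  have "A * g2 * A' * g2 \<in> T.Mk" using T.main_Mk[unfolded uu, OF AB] .
  then obtain Ms where Ms: "\<forall>m\<in>set Ms. is_markov (subalg2 alg g1 u) g2 m"
    "\<tau> (A * g2 * A' * g2) = \<tau> (sum_list Ms)"
    unfolding T.Mk_def uu by blast
  have E: "(g1 * u) ^ r * g1 * g2 * (g1 * u) ^ s * g1 * g2 = A * g2 * A' * g2"
    unfolding A_def A'_def by (simp add: mult.assoc)
  have z: "(0::'a) \<in> subalg2 alg g1 u" using subalg2.scal[of alg 0 g1 u] T.alg0 by simp
  show ?thesis
    unfolding Let_def u_def[symmetric]
    apply (rule exI[where x=0], rule exI[where x="\<lambda>_. 0"], rule exI[where x=Ms])
    using Ms z E by simp
qed

end
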